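(* Let $G$ be a graph, $X\subseteq T\subseteq V(G)$, $k'$ an integer, and $H=H_T$ the torso of $T$ in $G$. If there exists a connected $(X,T,k')$-witness $(L,R)$, then there exists a connected $(X,T,k')$-witness $(L',R')$ with $(L'\setminus R')\cap T=(L\setminus R)\cap T$ which further satisfies $N_H((L'\setminus R')\cap T)\supseteq L'\cap R'\cap T$.
   Context: A vertex cut of $G$ is an ordered pair $(L,R)$ with $L\cup R=V(G)$, $L\setminus R,R\setminus L\ne\emptyset$ and no edge between $L\setminus R$ and $R\setminus L$. The torso $H_T$ of $T$ in $G$ is the graph with vertex set $T$ and an edge $\{u,v\}$ whenever $\{u,v\}\in E(G)$ or $u,v\in N_G(D)$ for some connected component $D$ of $G\setminus T$. An $(X,T,k')$-witness is a vertex cut $(L,R)$ of $G$ with $|L\cap R|\le k'$, $|L\cap T|>|L\cap R|$, and $X\subseteq R$; it is connected if $H_T[(L\setminus R)\cap T]$ is connected. $N_H(S)$ denotes the set of vertices outside $S$ adjacent in $H$ to some vertex of $S$. *)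

theory Defs
  imports Main
begin

definition graph :: "'a set \<Rightarrow> 'a set set \<Rightarrow> bool" where
  "graph V E \<longleftrightarrow> finite V \<and> (\<forall>e\<in>E. e \<subseteq> V \<and> card e = 2)"

definition adj_in :: "'a set set \<Rightarrow> 'a set \<Rightarrow> 'a \<Rightarrow> 'a \<Rightarrow> bool" where
  "adj_in E S x y \<longleftrightarrow> x \<in> S \<and> y \<in> S \<and> {x, y} \<in> E"

definition connected_set :: "'a set set \<Rightarrow> 'a set \<Rightarrow> bool" where
  "connected_set E S \<longleftrightarrow> (\<forall>u\<in>S. \<forall>v\<in>S. (adj_in E S)\<^sup>*\<^sup>* u v)"

definition component :: "'a set set \<Rightarrow> 'a set \<Rightarrow> 'a set \<Rightarrow> bool" where
  "component E S D \<longleftrightarrow> (\<exists>u\<in>S. D = {v. (adj_in E S)\<^sup>*\<^sup>* u v})"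

definition nbhd :: "'a set \<Rightarrow> 'a set set \<Rightarrow> 'a set \<Rightarrow> 'a set" where
  "nbhd V E S = {v \<in> V - S. \<exists>u\<in>S. {u, v} \<in> E}"

text \<open>Edge set of the torso H_T of T in G = (V,E); its vertex set is T.\<close>
definition torso_edges :: "'a set \<Rightarrow> 'a set set \<Rightarrow> 'a set \<Rightarrow> 'a set set" where
  "torso_edges V E T = {{u, v} | u v. u \<in> T \<and> v \<in> T \<and> u \<noteq> v \<and>
      ({u, v} \<in> E \<or> (\<exists>D. component E (V - T) D \<and> u \<in> nbhd V E D \<and> v \<in> nbhd V E D))}"

definition vertex_cut :: "'a set \<Rightarrow> 'a set set \<Rightarrow> 'a set \<Rightarrow> 'a set \<Rightarrow> bool" where
  "vertex_cut V E L R \<longleftrightarrow> L \<union> R = V \<and> L - R \<noteq> {} \<and> R - L \<noteq> {} \<and>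
      (\<forall>u\<in>L - R. \<forall>v\<in>R - L. {u, v} \<notin> E)"

definition witness :: "'a set \<Rightarrow> 'a set set \<Rightarrow> 'a set \<Rightarrow> 'a set \<Rightarrow> int \<Rightarrow> 'a set \<Rightarrow> 'a set \<Rightarrow> bool" where
  "witness V E X T k L R \<longleftrightarrow> vertex_cut V E L R \<and> int (card (L \<inter> R)) \<le> k \<and>
      card (L \<inter> T) > card (L \<inter> R) \<and> X \<subseteq> R"

definition connected_witness :: "'a set \<Rightarrow> 'a set set \<Rightarrow> 'a set \<Rightarrow> 'a set \<Rightarrow> int \<Rightarrow> 'a set \<Rightarrow> 'a set \<Rightarrow> bool" where
  "connected_witness V E X T k L R \<longleftrightarrow> witness V E X T k L R \<and>
      connected_set (torso_edges V E T) ((L - R) \<inter> T)"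

end

theory Submission
  imports Defs
begin

lemma rtc_stays:
  assumes "(adj_in E S)\<^sup>*\<^sup>* y z" "y \<in> S" shows "z \<in> S"
  using assms by (induction rule: rtranclp_induct) (auto simp: adj_in_def)

theorem mainTheorem12:
  fixes V :: "'a set" and E :: "'a set set" and X T L R :: "'a set" and k :: int
  assumes "graph V E"
    and "X \<subseteq> T" and "T \<subseteq> V"
    and "connected_witness V E X T k L R"
  shows "\<exists>L' R'. connected_witness V E X T k L' R' \<and>
           (L' - R') \<inter> T = (L - R) \<inter> T \<and>
           nbhd T (torso_edges V E T) ((L' - R') \<inter> T) \<supseteq> L' \<inter> R' \<inter> T"
proof -
  have finV: "finite V" using assms(1) by (simp add: graph_def)
  have cw: "connected_set (torso_edges V E T) ((L - R) \<inter> T)"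
    and vc: "vertex_cut V E L R" and ck: "int (card (L \<inter> R)) \<le> k"
    and cLT: "card (L \<inter> T) > card (L \<inter> R)" and XR: "X \<subseteq> R"
    using assms(4) by (auto simp: connected_witness_def witness_def)
  have LRV: "L \<union> R = V" and RL: "R - L \<noteq> {}"
    and noE: "\<And>u v. u \<in> L - R \<Longrightarrow> v \<in> R - L \<Longrightarrow> {u, v} \<notin> E"
    using vc by (auto simp: vertex_cut_def)
  have finL: "finite L" and finR: "finite R" using LRV finV
    by (metis finite_Un)+
  define A where "A = (L - R) \<inter> T"
  define Z where "Z = {z. \<exists>a\<in>A. \<exists>y. {a, y} \<in> E \<and> y \<in> V - T \<and> (adj_in E (V - T))\<^sup>*\<^sup>* y z}"
  define U where "U = A \<union> ((L - R) \<inter> Z)"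
  define N where "N = nbhd V E U"
  define L' where "L' = U \<union> N"
  define R' where "R' = V - U"
  have ZT: "Z \<subseteq> V - T" unfolding Z_def using rtc_stays by fastforce
  have UL: "U \<subseteq> L - R" unfolding U_def A_def by auto
  have UV: "U \<subseteq> V" using UL LRV by auto
  have UT: "U \<inter> T = A" unfolding U_def A_def using ZT by auto
  have NV: "N \<subseteq> V - U" unfolding N_def nbhd_def by auto
  have NS: "N \<subseteq> L \<inter> R"
  proof
    fix w assume "w \<in> N"
    then obtain u where w: "w \<in> V" "w \<notin> U" and u: "u \<in> U" "{u, w} \<in> E"
      unfolding N_def nbhd_def by auto
    have uLR: "u \<in> L - R" using u UL by auto
    have wL: "w \<in> L" using noE[OF uLR] u w LRV by auto
    show "w \<in> L \<inter> R"
    proof (rule ccontr)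
      assume "w \<notin> L \<inter> R"
      hence wLR: "w \<in> L - R" using wL by auto
      have wT: "w \<notin> T" using wLR w(2) unfolding U_def A_def by auto
      have "w \<in> Z"
      proof (cases "u \<in> A")
        case True
        then show ?thesis unfolding Z_def using u w wT by auto
      next
        case False
        hence uZ: "u \<in> Z" using u unfolding U_def by auto
        then obtain a y where ay: "a \<in> A" "{a, y} \<in> E" "y \<in> V - T" "(adj_in E (V - T))\<^sup>*\<^sup>* y u"
          unfolding Z_def by auto
        have "adj_in E (V - T) u w" using uZ ZT w wT u unfolding adj_in_def by auto
        hence "(adj_in E (V - T))\<^sup>*\<^sup>* y w" using ay(4) by (meson rtranclp.rtrancl_into_rtrancl)
        then show ?thesis unfolding Z_def using ay by auto
      qed
      thus False using wLR w(2) unfolding U_def by auto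
    qed
  qed
  have NH: "N \<inter> T \<subseteq> nbhd T (torso_edges V E T) A"
  proof
    fix w assume wN: "w \<in> N \<inter> T"
    then obtain u where w: "w \<in> V" "w \<notin> U" "w \<in> T" and u: "u \<in> U" "{u, w} \<in> E"
      unfolding N_def nbhd_def by auto
    have wA: "w \<notin> A" using w U_def by auto
    have "\<exists>a\<in>A. {a, w} \<in> torso_edges V E T"
    proof (cases "u \<in> A")
      case True
      hence "u \<in> T" "u \<noteq> w" using A_def wA by auto
      then show ?thesis using True u w unfolding torso_edges_def by blast
    next
      case False
      hence uZ: "u \<in> Z" using u unfolding U_def by auto
      then obtain a y where ay: "a \<in> A" "{a, y} \<in> E" "y \<in> V - T" "(adj_in E (V - T))\<^sup>*\<^sup>* y u"
        unfolding Z_def by auto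
      define D where "D = {v. (adj_in E (V - T))\<^sup>*\<^sup>* y v}"
      have comp: "component E (V - T) D" unfolding component_def D_def using ay by auto
      have DT: "D \<subseteq> V - T" unfolding D_def using rtc_stays ay(3) by fastforce
      have yD: "y \<in> D" and uD: "u \<in> D" unfolding D_def using ay by auto
      have aT: "a \<in> T" "a \<in> V" using ay(1) A_def LRV by auto
      have "a \<in> nbhd V E D" unfolding nbhd_def using aT DT yD ay(2)
        by (auto simp: insert_commute)
      moreover have "w \<in> nbhd V E D" unfolding nbhd_def using w DT uD u by auto
      moreover have "a \<noteq> w" using ay(1) wA by auto
      ultimately have "{a, w} \<in> torso_edges V E T"
        unfolding torso_edges_def using comp aT w by blast
      then show ?thesis using ay(1) by blast
    qed
    then show "w \<in> nbhd T (torso_edges V E T) A" unfolding nbhd_def using w wA by auto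
  qed
  have finN: "finite N" using NV finV finite_subset by blast
  have finA: "finite A" using A_def finL by auto
  have diff1: "L' - R' = U" using L'_def R'_def NV UV by auto
  have int1: "L' \<inter> R' = N" using L'_def R'_def NV by auto
  have LT': "L' \<inter> T = A \<union> (N \<inter> T)" using L'_def UT by auto
  have cardS: "card (L \<inter> R) = card (L \<inter> R \<inter> T) + card (L \<inter> R - T)"
    using finL by (metis Diff_Diff_Int card_Diff_subset_Int finite_Int le_add_diff_inverse
       Int_lower1 card_mono card_Diff_subset inf.cobounded1 add.commute finite_Diff
       card_Un_disjoint Un_Diff_Int Diff_disjoint inf_commute Int_Diff_disjoint)
  have cardLT: "card (L \<inter> T) = card A + card (L \<inter> R \<inter> T)"
  proof -
    have "L \<inter> T = A \<union> (L \<inter> R \<inter> T)" "A \<inter> (L \<inter> R \<inter> T) = {}" using A_def by auto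
    thus ?thesis using finL by (simp add: card_Un_disjoint finA)
  qed
  have cardN: "card N = card (N \<inter> T) + card (N - T)"
    using finN by (metis card_Int_Diff finite_Int)
  have "card (N - T) \<le> card (L \<inter> R - T)"
    using NS finL by (intro card_mono) auto
  hence Apos: "card A > card (N - T)" using cLT cardS cardLT by linarith
  have cardL'T: "card (L' \<inter> T) = card A + card (N \<inter> T)"
  proof -
    have "A \<inter> (N \<inter> T) = {}" using NV U_def by auto
    thus ?thesis using LT' finA finN by (simp add: card_Un_disjoint)
  qed
  have "card N \<le> card (L \<inter> R)" using NS finL by (intro card_mono) auto
  hence ck': "int (card (L' \<inter> R')) \<le> k" using ck int1 by simp
  have cLT': "card (L' \<inter> T) > card (L' \<inter> R')" using cardL'T cardN Apos int1 by simp
  have Ane: "A \<noteq> {}" using Apos by auto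
  have vc': "vertex_cut V E L' R'"
    unfolding vertex_cut_def
  proof (intro conjI ballI)
    show "L' \<union> R' = V" using L'_def R'_def UV NV by auto
    show "L' - R' \<noteq> {}" using diff1 Ane U_def by auto
    have "R - L \<subseteq> R' - L'" using R'_def L'_def UL NS LRV by auto
    thus "R' - L' \<noteq> {}" using RL by auto
  next
    fix u v assume a: "u \<in> L' - R'" "v \<in> R' - L'"
    hence "u \<in> U" "v \<in> V" "v \<notin> U" "v \<notin> N" using diff1 L'_def R'_def by auto
    thus "{u, v} \<notin> E" unfolding N_def nbhd_def by blast
  qed
  have XR': "X \<subseteq> R'" using XR UL assms(2,3) R'_def by auto
  have A': "(L' - R') \<inter> T = A" using diff1 UT by simp
  have "connected_witness V E X T k L' R'"
    unfolding connected_witness_def witness_def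
    using vc' ck' cLT' XR' A' cw A_def by simp
  moreover have "(L' - R') \<inter> T = (L - R) \<inter> T" using A' A_def by simp
  moreover have "nbhd T (torso_edges V E T) ((L' - R') \<inter> T) \<supseteq> L' \<inter> R' \<inter> T"
    using A' int1 NH by simp
  ultimately show ?thesis by blast
qed

end
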